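(* Let $L$ be an oriented, ordered virtual link diagram with affine bilabeling $C$. Let $L_i$ be a component of weight $n$ whose starting point $s$ carries bilabel $(a_1,a_2)$. Let $c$ be the first classical crossing met by $L_i$ after $s$ (in the direction of orientation), and suppose $c$ is an external crossing. Let $\iota\in\{\pm1\}$ be the index change of $L_i$'s passage through $c$. Let $C'$ be the bilabeling obtained by moving the starting point of $L_i$ forward to a point $s'$ just past $c$, still with starting bilabel $(a_1,a_2)$, and keeping everything else the same. Then: - the weight of $c$ changes by $+(n-\iota)$ if $L_i$ is the overstrand at $c$, and by $-(n-\iota)$ if $L_i$ is the understrand at $c$, i.e. $W_{C'}(c)=W_C(c)\pm(n-\iota)$; and - all other labels of $L_i$ (those not on the segment between $s$ and $s'$) shift by $-\iota$.
   Context: **Diagrams.** A virtual link diagram is an oriented planar diagram of ordered closed curves $L_1,\dots,L_n$ (components) with classical and virtual crossings. **Crossing conventions.** Draw a classical crossing with both strands oriented upward. - The bottom-left-to-top-right strand has index change $-1$; the bottom-right-to-top-left strand has index change $+1$. - The crossing is positive if the overstrand is the bottom-left-to-top-right strand, and negative otherwise. - Self-crossings have both strands on one component; external crossings have strands on different components. - The weight of a component $L_i$ is the sum of the index changes of $L_i$ over its passages through external classical crossings. **Affine bilabeling.** - Each component gets a starting point with bilabel $(a^{(i)}_1,a^{(i)}_2)$ of formal integer variables. - The bilabel is carried along the component in its orientation and is unchanged at virtual crossings. - At a classical crossing with index change $\varepsilon$, the first entry changes by $\varepsilon$ if the crossing is a self-crossing, and the second entry changes by $\varepsilon$ if external. -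 On returning to the starting point, the label is off by the component's weight in the second entry; this discrepancy is placed at the starting point. **Crossing weight.** For $|(x,y)|=x+y$ and $c$ drawn with both strands upward: - if $c$ is positive, $W(c)=|\text{bottom-left}|-|\text{top-left}|$; - if $c$ is negative, $W(c)=|\text{bottom-right}|-|\text{top-right}|$. Weights are computed with the labels as integer linear expressions in the same formal variables. *)

theory Defs
  imports Main
begin

text \<open>
Combinatorial (Gauss-diagram) model of an oriented, ordered virtual link diagram.
Component j is described by the list D j of its passages through classical crossings,
read in the direction of orientation starting from its starting point; a passage is a
pair (c, e) where c is the crossing and e is the index change of that passage:
e = -1 for the bottom-left-to-top-right strand and e = 1 for the bottom-right-to-top-left
strand.  Virtual crossings do not affect anything and are not recorded.
pos c holds iff c is a positive crossing, i.e. the overstrand is the strand with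
index change -1.
\<close>

definition wf_diagram :: "nat \<Rightarrow> 'c set \<Rightarrow> (nat \<Rightarrow> ('c \<times> int) list) \<Rightarrow> bool" where
  "wf_diagram N Cr D \<longleftrightarrow> finite Cr
     \<and> (\<forall>j<N. \<forall>p\<in>set (D j). fst p \<in> Cr \<and> snd p \<in> {-1, 1})
     \<and> (\<forall>c\<in>Cr. \<forall>e\<in>{-1, 1::int}. \<exists>!jk. fst jk < N \<and> snd jk < length (D (fst jk))
                                     \<and> D (fst jk) ! snd jk = (c, e))"

definition passage_loc :: "nat \<Rightarrow> (nat \<Rightarrow> ('c \<times> int) list) \<Rightarrow> 'c \<Rightarrow> int \<Rightarrow> nat \<times> nat" where
  "passage_loc N D c e = (THE jk. fst jk < N \<and> snd jk < length (D (fst jk))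
                                   \<and> D (fst jk) ! snd jk = (c, e))"

definition is_self :: "(nat \<Rightarrow> ('c \<times> int) list) \<Rightarrow> nat \<Rightarrow> 'c \<times> int \<Rightarrow> bool" where
  "is_self D i p \<longleftrightarrow> (fst p, - snd p) \<in> set (D i)"

definition self_contrib :: "(nat \<Rightarrow> ('c \<times> int) list) \<Rightarrow> nat \<Rightarrow> 'c \<times> int \<Rightarrow> int" where
  "self_contrib D i p = (if is_self D i p then snd p else 0)"

definition ext_contrib :: "(nat \<Rightarrow> ('c \<times> int) list) \<Rightarrow> nat \<Rightarrow> 'c \<times> int \<Rightarrow> int" where
  "ext_contrib D i p = (if is_self D i p then 0 else snd p)"

definition comp_weight :: "(nat \<Rightarrow> ('c \<times> int) list) \<Rightarrow> nat \<Rightarrow> int" where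
  "comp_weight D i = sum_list (map (ext_contrib D i) (D i))"

text \<open>Affine bilabel of segment k of component i, where the starting bilabels are a j
(formal variables, modelled as arbitrary integers).  Segment k (0 \<le> k \<le> length (D i)) is
the arc after the first k passages: segment 0 starts at the starting point, segment k
is the incoming arc of passage k and the outgoing arc of passage k-1, and the last
segment length (D i) ends at the starting point (it carries the weight discrepancy).\<close>
definition bilabel :: "(nat \<Rightarrow> ('c \<times> int) list) \<Rightarrow> (nat \<Rightarrow> int \<times> int) \<Rightarrow> nat \<Rightarrow> nat \<Rightarrow> int \<times> int" where
  "bilabel D a i k =
     (fst (a i) + sum_list (map (self_contrib D i) (take k (D i))),
      snd (a i) + sum_list (map (ext_contrib D i) (take k (D i))))"

definition lab_abs :: "int \<times> int \<Rightarrow> int" where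
  "lab_abs l = fst l + snd l"

definition in_label :: "nat \<Rightarrow> (nat \<Rightarrow> ('c \<times> int) list) \<Rightarrow> (nat \<Rightarrow> int \<times> int) \<Rightarrow> 'c \<Rightarrow> int \<Rightarrow> int \<times> int" where
  "in_label N D a c e = (case passage_loc N D c e of (j, k) \<Rightarrow> bilabel D a j k)"

definition out_label :: "nat \<Rightarrow> (nat \<Rightarrow> ('c \<times> int) list) \<Rightarrow> (nat \<Rightarrow> int \<times> int) \<Rightarrow> 'c \<Rightarrow> int \<Rightarrow> int \<times> int" where
  "out_label N D a c e = (case passage_loc N D c e of (j, k) \<Rightarrow> bilabel D a j (Suc k))"

text \<open>Crossing weight: bottom-left = incoming arc of strand -1, top-left = outgoing arc of
strand 1, bottom-right = incoming arc of strand 1, top-right = outgoing arc of strand -1.\<close>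
definition crossing_weight :: "nat \<Rightarrow> (nat \<Rightarrow> ('c \<times> int) list) \<Rightarrow> ('c \<Rightarrow> bool) \<Rightarrow> (nat \<Rightarrow> int \<times> int) \<Rightarrow> 'c \<Rightarrow> int" where
  "crossing_weight N D pos a c =
     (if pos c then lab_abs (in_label N D a c (-1)) - lab_abs (out_label N D a c 1)
      else lab_abs (in_label N D a c 1) - lab_abs (out_label N D a c (-1)))"

definition is_over :: "('c \<Rightarrow> bool) \<Rightarrow> 'c \<Rightarrow> int \<Rightarrow> bool" where
  "is_over pos c e \<longleftrightarrow> (if pos c then e = -1 else e = 1)"

end

theory Submission
  imports Defs
begin

lemma wf_distinct:
  assumes wf: "wf_diagram N Cr D" and i: "i < N"
  shows "distinct (D i)"
proof (subst distinct_conv_nth, intro allI impI)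
  fix k1 k2 assume k1: "k1 < length (D i)" and k2: "k2 < length (D i)" and ne: "k1 \<noteq> k2"
  show "D i ! k1 \<noteq> D i ! k2"
  proof
    assume eq: "D i ! k1 = D i ! k2"
    obtain c e where ce: "D i ! k1 = (c, e)" by (cases "D i ! k1")
    have mem: "(c, e) \<in> set (D i)" using ce k1 by (metis nth_mem)
    have "c \<in> Cr" "e \<in> {-1, 1}" using wf i mem unfolding wf_diagram_def by force+
    then have "\<exists>!jk. fst jk < N \<and> snd jk < length (D (fst jk)) \<and> D (fst jk) ! snd jk = (c, e)"
      using wf unfolding wf_diagram_def by blast
    moreover have "fst (i,k1) < N \<and> snd (i,k1) < length (D (fst (i,k1))) \<and> D (fst (i,k1)) ! snd (i,k1) = (c, e)"
      using i k1 ce by simp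
    moreover have "fst (i,k2) < N \<and> snd (i,k2) < length (D (fst (i,k2))) \<and> D (fst (i,k2)) ! snd (i,k2) = (c, e)"
      using i k2 ce eq by simp
    ultimately have "(i,k1) = (i,k2)" by blast
    then show False using ne by simp
  qed
qed

lemma self_sum_zero:
  fixes xs :: "('c \<times> int) list"
  assumes "distinct xs"
  shows "sum_list (map (\<lambda>p. if (fst p, - snd p) \<in> set xs then snd p else 0) xs) = 0"
proof -
  define T where "T = {p \<in> set xs. (fst p, - snd p) \<in> set xs}"
  define g :: "'c \<times> int \<Rightarrow> 'c \<times> int" where "g = (\<lambda>p. (fst p, - snd p))"
  have fT: "finite T" unfolding T_def by simp
  have "sum_list (map (\<lambda>p. if (fst p, - snd p) \<in> set xs then snd p else 0) xs)
      = sum (\<lambda>p. if (fst p, - snd p) \<in> set xs then snd p else 0) (set xs)"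
    using assms by (simp add: sum_list_distinct_conv_sum_set)
  also have "\<dots> = sum snd T"
    unfolding T_def by (simp add: sum.inter_filter)
  finally have 1: "sum_list (map (\<lambda>p. if (fst p, - snd p) \<in> set xs then snd p else 0) xs) = sum snd T" .
  have "sum snd T = sum (snd \<circ> g) T"
    by (rule sum.reindex_bij_witness[of T g g]) (auto simp: T_def g_def)
  also have "\<dots> = - sum snd T" by (simp add: g_def o_def sum_negf)
  finally have "sum snd T = 0" by simp
  with 1 show ?thesis by simp
qed

lemma ploc:
  assumes "\<exists>!jk. fst jk < N \<and> snd jk < length (D (fst jk)) \<and> D (fst jk) ! snd jk = (c, e)"
    and "fst x < N \<and> snd x < length (D (fst x)) \<and> D (fst x) ! snd x = (c, e)"
  shows "passage_loc N D c e = x"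
  unfolding passage_loc_def using assms by (rule the1_equality)

theorem lemma1:
  fixes N :: nat and Cr :: "'c set" and D :: "nat \<Rightarrow> ('c \<times> int) list"
    and pos :: "'c \<Rightarrow> bool" and a :: "nat \<Rightarrow> int \<times> int" and i :: nat
  assumes wf: "wf_diagram N Cr D"
    and i: "i < N"
    and ne: "D i \<noteq> []"
    and ext: "\<not> is_self D i (hd (D i))"
  shows "let c = fst (hd (D i)); \<iota> = snd (hd (D i)); n = comp_weight D i;
             D' = D(i := rotate1 (D i)) in
           crossing_weight N D' pos a c =
             crossing_weight N D pos a c + (if is_over pos c \<iota> then n - \<iota> else - (n - \<iota>))
           \<and> (\<forall>k < length (D i). bilabel D' a i k =
                (fst (bilabel D a i (Suc k)), snd (bilabel D a i (Suc k)) - \<iota>))"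
proof -
  obtain c \<iota> rest where Di: "D i = (c, \<iota>) # rest"
    using ne by (cases "D i") auto
  define D' where "D' = D(i := rotate1 (D i))"
  define n where "n = comp_weight D i"
  have D'i: "D' i = rest @ [(c, \<iota>)]" by (simp add: D'_def Di)
  have D'j: "j \<noteq> i \<Longrightarrow> D' j = D j" for j by (simp add: D'_def)
  have mem: "(c, \<iota>) \<in> set (D i)" by (simp add: Di)
  have cCr: "c \<in> Cr" and iota: "\<iota> \<in> {-1, 1}" using wf i mem unfolding wf_diagram_def by force+
  have uniq: "\<And>e. e \<in> {-1, 1} \<Longrightarrow> \<exists>!jk. fst jk < N \<and> snd jk < length (D (fst jk)) \<and> D (fst jk) ! snd jk = (c, e)"
    using wf cCr unfolding wf_diagram_def by blast
  have dist: "distinct (D i)" using wf_distinct[OF wf i] .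
  have extc: "(c, - \<iota>) \<notin> set (D i)" using ext by (simp add: Di is_self_def)
  have setD': "set (D' i) = set (D i)" by (simp add: D'_def)
  have sc: "self_contrib D' i = self_contrib D i"
    by (rule HOL.ext) (simp add: self_contrib_def is_self_def setD')
  have ec: "ext_contrib D' i = ext_contrib D i"
    by (rule HOL.ext) (simp add: ext_contrib_def is_self_def setD')
  have scp: "self_contrib D i (c, \<iota>) = 0" using extc by (simp add: self_contrib_def is_self_def)
  have ecp: "ext_contrib D i (c, \<iota>) = \<iota>" using extc by (simp add: ext_contrib_def is_self_def)
  have selfz: "sum_list (map (self_contrib D i) (D i)) = 0"
  proof -
    have "self_contrib D i = (\<lambda>p. if (fst p, - snd p) \<in> set (D i) then snd p else 0)"
      by (rule HOL.ext) (simp add: self_contrib_def is_self_def)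
    then show ?thesis using self_sum_zero[OF dist] by simp
  qed
  have selfrest: "sum_list (map (self_contrib D i) rest) = 0" using selfz scp by (simp add: Di)
  have extrest: "sum_list (map (ext_contrib D i) rest) = n - \<iota>"
    using ecp by (simp add: n_def comp_weight_def Di)
  have pl1: "passage_loc N D c \<iota> = (i, 0)"
    by (rule ploc[OF uniq[OF iota]]) (simp add: i Di)
  have pl1': "passage_loc N D' c \<iota> = (i, length rest)"
  proof (unfold passage_loc_def, rule the_equality)
    show "fst (i, length rest) < N \<and> snd (i, length rest) < length (D' (fst (i, length rest))) \<and>
          D' (fst (i, length rest)) ! snd (i, length rest) = (c, \<iota>)" using i by (simp add: D'i)
  next
    fix jk assume h: "fst jk < N \<and> snd jk < length (D' (fst jk)) \<and> D' (fst jk) ! snd jk = (c, \<iota>)"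
    show "jk = (i, length rest)"
    proof (cases "fst jk = i")
      case True
      have dd: "distinct (rest @ [(c, \<iota>)])" using dist Di by auto
      have "(rest @ [(c, \<iota>)]) ! snd jk = (rest @ [(c, \<iota>)]) ! length rest" using h True D'i by simp
      then have "snd jk = length rest" using dd h True D'i
        by (subst (asm) nth_eq_iff_index_eq) auto
      then show ?thesis using True by (cases jk) auto
    next
      case False
      have "fst jk < N \<and> snd jk < length (D (fst jk)) \<and> D (fst jk) ! snd jk = (c, \<iota>)"
        using h False D'j by simp
      moreover have "fst (i,0) < N \<and> snd (i,0) < length (D (fst (i,0))) \<and> D (fst (i,0)) ! snd (i,0) = (c, \<iota>)"
        using i Di by simp
      ultimately have "jk = (i,0)" using uniq[OF iota] by blast
      then show ?thesis using False by simp
    qed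
  qed
  have miota: "- \<iota> \<in> {-1, 1}" using iota by auto
  obtain j k where jk: "passage_loc N D c (- \<iota>) = (j, k)" by (cases "passage_loc N D c (- \<iota>)")
  have Pjk: "j < N \<and> k < length (D j) \<and> D j ! k = (c, - \<iota>)"
    using theI'[OF uniq[OF miota]] jk unfolding passage_loc_def by simp
  have ji: "j \<noteq> i" using Pjk extc by (metis nth_mem)
  have pl2': "passage_loc N D' c (- \<iota>) = (j, k)"
  proof (unfold passage_loc_def, rule the_equality)
    show "fst (j, k) < N \<and> snd (j, k) < length (D' (fst (j, k))) \<and> D' (fst (j, k)) ! snd (j, k) = (c, - \<iota>)"
      using Pjk ji D'j by simp
  next
    fix jk assume h: "fst jk < N \<and> snd jk < length (D' (fst jk)) \<and> D' (fst jk) ! snd jk = (c, - \<iota>)"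
    show "jk = (j, k)"
    proof (cases "fst jk = i")
      case True
      then have "(c, - \<iota>) \<in> set (D' i)" using h by (metis nth_mem)
      then show ?thesis using setD' extc by simp
    next
      case False
      have "fst jk < N \<and> snd jk < length (D (fst jk)) \<and> D (fst jk) ! snd jk = (c, - \<iota>)"
        using h False D'j by simp
      moreover have "fst (j,k) < N \<and> snd (j,k) < length (D (fst (j,k))) \<and> D (fst (j,k)) ! snd (j,k) = (c, - \<iota>)"
        using Pjk by simp
      ultimately show "jk = (j,k)" using uniq[OF miota] by blast
    qed
  qed
  have scj: "self_contrib D' j = self_contrib D j"
    by (rule HOL.ext) (simp add: self_contrib_def is_self_def D'j[OF ji])
  have ecj: "ext_contrib D' j = ext_contrib D j"
    by (rule HOL.ext) (simp add: ext_contrib_def is_self_def D'j[OF ji])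
  have bjeq: "bilabel D' a j m = bilabel D a j m" for m
    using ji D'j by (simp add: bilabel_def scj ecj)
  have in2: "in_label N D' a c (- \<iota>) = in_label N D a c (- \<iota>)"
    by (simp add: in_label_def pl2' jk bjeq)
  have out2: "out_label N D' a c (- \<iota>) = out_label N D a c (- \<iota>)"
    by (simp add: out_label_def pl2' jk bjeq)
  have in1: "lab_abs (in_label N D a c \<iota>) = fst (a i) + snd (a i)"
    by (simp add: in_label_def pl1 bilabel_def lab_abs_def)
  have out1: "lab_abs (out_label N D a c \<iota>) = fst (a i) + snd (a i) + \<iota>"
    by (simp add: out_label_def pl1 bilabel_def lab_abs_def Di scp ecp)
  have in1': "lab_abs (in_label N D' a c \<iota>) = fst (a i) + snd (a i) + (n - \<iota>)"
    by (simp add: in_label_def pl1' bilabel_def lab_abs_def D'i sc ec selfrest extrest)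
  have out1': "lab_abs (out_label N D' a c \<iota>) = fst (a i) + snd (a i) + n"
    by (simp add: out_label_def pl1' bilabel_def lab_abs_def D'i sc ec selfrest extrest scp ecp)
  have W: "crossing_weight N D' pos a c =
             crossing_weight N D pos a c + (if is_over pos c \<iota> then n - \<iota> else - (n - \<iota>))"
  proof (cases "\<iota> = -1")
    case True
    note h = True
    show ?thesis using in2 out2 in1 out1 in1' out1' unfolding h crossing_weight_def is_over_def
      by auto
  next
    case False
    then have h: "\<iota> = 1" using iota by simp
    show ?thesis using in2 out2 in1 out1 in1' out1' unfolding h crossing_weight_def is_over_def
      by auto
  qed
  have B: "\<forall>k < length (D i). bilabel D' a i k =
                (fst (bilabel D a i (Suc k)), snd (bilabel D a i (Suc k)) - \<iota>)"
  proof (intro allI impI)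
    fix k assume "k < length (D i)"
    then have "k \<le> length rest" by (simp add: Di)
    then show "bilabel D' a i k = (fst (bilabel D a i (Suc k)), snd (bilabel D a i (Suc k)) - \<iota>)"
      by (simp add: bilabel_def D'i sc ec Di scp ecp)
  qed
  show ?thesis using W B unfolding D'_def n_def Di by (simp add: Let_def)
qed

end
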